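(* Let $G$ be a directed graph and $D$ a demand. Suppose there exists a $2h$-length moving cut $C$ with $2h$-length sparsity $\phi=\mathrm{spars}_{2h}(C,D)$. Then any flow routing $D$ in $G$ all of whose flow paths have length at most $h$ has congestion at least $\frac{1}{2\phi}$.
   Context: $G=(V,E)$ is a finite directed graph with positive integer edge lengths $\ell(e)$ and capacities $u(e)$. A demand is $D:V\times V\to\mathbb{R}_{\ge0}$. For $H>0$, an $H$-length moving cut is $C:E\to\{0,\tfrac1H,\dots\}\cap[0,1]$, with size $|C|=\sum_eu(e)C(e)$; $G-C$ is $G$ with lengths $\ell(e)+H\cdot C(e)$. $\mathrm{sep}_{h'}(C,D)=\sum_{(u,v):\mathrm{dist}_{G-C}(u,v)>h'}D(u,v)$ and (when positive) $\mathrm{spars}_{h'}(C,D)=|C|/\mathrm{sep}_{h'}(C,D)$. A flow assigns nonnegative values to simple directed paths; it routes $D$ if for each ordered pair $(v,w)$ the total value on $v\to w$ paths equals $D(v,w)$; its congestion is $\max_e(\text{flow through }e)/u(e)$. *)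

theory Defs
  imports "Graph_Theory.Shortest_Path"
begin

definition is_moving_cut :: "('a,'b) pre_digraph \<Rightarrow> real \<Rightarrow> ('b \<Rightarrow> real) \<Rightarrow> bool" where
  "is_moving_cut G H C \<longleftrightarrow>
     (\<forall>e \<in> arcs G. (\<exists>k::nat. C e = real k / H) \<and> 0 \<le> C e \<and> C e \<le> 1)"

definition cut_size :: "('a,'b) pre_digraph \<Rightarrow> ('b \<Rightarrow> nat) \<Rightarrow> ('b \<Rightarrow> real) \<Rightarrow> real" where
  "cut_size G cap C = (\<Sum>e \<in> arcs G. real (cap e) * C e)"

text \<open>Distance in G - C: shortest walk length with lengths len e + H * C e (infinite if unreachable).\<close>
definition dist_minus :: "('a,'b) pre_digraph \<Rightarrow> ('b \<Rightarrow> nat) \<Rightarrow> real \<Rightarrow> ('b \<Rightarrow> real) \<Rightarrow> 'a \<Rightarrow> 'a \<Rightarrow> ereal" where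
  "dist_minus G len H C u v = wf_digraph.\<mu> G (\<lambda>e. real (len e) + H * C e) u v"

definition sep :: "('a,'b) pre_digraph \<Rightarrow> ('b \<Rightarrow> nat) \<Rightarrow> real \<Rightarrow> ('b \<Rightarrow> real) \<Rightarrow> real
                   \<Rightarrow> ('a \<Rightarrow> 'a \<Rightarrow> real) \<Rightarrow> real" where
  "sep G len H C h' D =
     (\<Sum>(u,v) \<in> {(u,v). u \<in> verts G \<and> v \<in> verts G \<and> dist_minus G len H C u v > ereal h'}. D u v)"

definition spars :: "('a,'b) pre_digraph \<Rightarrow> ('b \<Rightarrow> nat) \<Rightarrow> ('b \<Rightarrow> nat) \<Rightarrow> real \<Rightarrow> ('b \<Rightarrow> real)
                     \<Rightarrow> real \<Rightarrow> ('a \<Rightarrow> 'a \<Rightarrow> real) \<Rightarrow> real" where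
  "spars G len cap H C h' D = cut_size G cap C / sep G len H C h' D"

definition is_flow :: "('a,'b) pre_digraph \<Rightarrow> ('a \<Rightarrow> 'b list \<Rightarrow> 'a \<Rightarrow> real) \<Rightarrow> bool" where
  "is_flow G F \<longleftrightarrow> (\<forall>u p v. pre_digraph.apath G u p v \<longrightarrow> 0 \<le> F u p v)"

definition routes :: "('a,'b) pre_digraph \<Rightarrow> ('a \<Rightarrow> 'b list \<Rightarrow> 'a \<Rightarrow> real) \<Rightarrow> ('a \<Rightarrow> 'a \<Rightarrow> real) \<Rightarrow> bool" where
  "routes G F D \<longleftrightarrow> (\<forall>v \<in> verts G. \<forall>w \<in> verts G.
      (\<Sum>p \<in> {p. pre_digraph.apath G v p w}. F v p w) = D v w)"

definition flow_through :: "('a,'b) pre_digraph \<Rightarrow> ('a \<Rightarrow> 'b list \<Rightarrow> 'a \<Rightarrow> real) \<Rightarrow> 'b \<Rightarrow> real" where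
  "flow_through G F e =
     (\<Sum>(u,p,v) \<in> {(u,p,v). pre_digraph.apath G u p v \<and> e \<in> set p}. F u p v)"

definition congestion :: "('a,'b) pre_digraph \<Rightarrow> ('b \<Rightarrow> nat) \<Rightarrow> ('a \<Rightarrow> 'b list \<Rightarrow> 'a \<Rightarrow> real) \<Rightarrow> real" where
  "congestion G cap F = Max ((\<lambda>e. flow_through G F e / real (cap e)) ` arcs G)"

definition path_length_bounded :: "('a,'b) pre_digraph \<Rightarrow> ('b \<Rightarrow> nat) \<Rightarrow> ('a \<Rightarrow> 'b list \<Rightarrow> 'a \<Rightarrow> real) \<Rightarrow> real \<Rightarrow> bool" where
  "path_length_bounded G len F h \<longleftrightarrow>
     (\<forall>u p v. pre_digraph.apath G u p v \<and> F u p v > 0 \<longrightarrow> wf_digraph.awalk_cost (\<lambda>e. real (len e)) p \<le> h)"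

end

theory Submission
  imports Defs
begin

lemma path_cut_bound:
  fixes G :: "('a,'b) pre_digraph" and len :: "'b \<Rightarrow> nat" and h :: real and C :: "'b \<Rightarrow> real"
  assumes fin: "fin_digraph G" and hpos: "h > 0"
    and ap: "pre_digraph.apath G u p v"
    and lenp: "wf_digraph.awalk_cost (\<lambda>e. real (len e)) p \<le> h"
    and dist: "dist_minus G len (2*h) C u v > ereal (2*h)"
  shows "1 \<le> 2 * (\<Sum>e\<in>arcs G. if e \<in> set p then C e else 0)"
proof -
  interpret fin_digraph G by fact
  have aw: "awalk u p v" and dp: "distinct p"
    using ap by (auto simp: apath_def intro: distinct_verts_imp_distinct)
  have sp: "set p \<subseteq> arcs G" using aw by (auto simp: awalk_def)
  let ?f = "\<lambda>e. real (len e) + 2*h * C e"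
  have "\<mu> ?f u v \<le> ereal (awalk_cost ?f p)" by (rule min_cost_le_walk_cost[OF aw])
  with dist have "ereal (2*h) < ereal (awalk_cost ?f p)"
    unfolding dist_minus_def by (rule order_less_le_trans)
  then have gt: "awalk_cost ?f p > 2*h" by simp
  have "awalk_cost ?f p = awalk_cost (\<lambda>e. real (len e)) p + 2*h * sum_list (map C p)"
    unfolding awalk_cost_def by (simp add: sum_list_addf sum_list_const_mult)
  also have "sum_list (map C p) = sum C (set p)"
    using dp by (simp add: sum_list_distinct_conv_sum_set)
  also have "sum C (set p) = (\<Sum>e\<in>arcs G. if e \<in> set p then C e else 0)"
    using sp finite_arcs by (simp add: sum.If_cases Int_absorb1 Int_absorb2 inf_commute)
  finally have "h * 1 < h * (2 * (\<Sum>e\<in>arcs G. if e \<in> set p then C e else 0))"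
    using gt lenp by (simp add: algebra_simps)
  then show ?thesis using hpos
    by (simp only: mult_less_cancel_left_pos)
qed


theorem theoremA3:
  fixes G :: "('a,'b) pre_digraph" and len cap :: "'b \<Rightarrow> nat" and h :: real
    and D :: "'a \<Rightarrow> 'a \<Rightarrow> real" and C :: "'b \<Rightarrow> real"
    and F :: "'a \<Rightarrow> 'b list \<Rightarrow> 'a \<Rightarrow> real"
  assumes "fin_digraph G"
    and "\<forall>e \<in> arcs G. len e > 0 \<and> cap e > 0"
    and "\<forall>u \<in> verts G. \<forall>v \<in> verts G. D u v \<ge> 0"
    and "h > 0"
    and "is_moving_cut G (2*h) C"
    and "sep G len (2*h) C (2*h) D > 0"
    and "is_flow G F" and "routes G F D" and "path_length_bounded G len F h"
  shows "congestion G cap F \<ge> 1 / (2 * spars G len cap (2*h) C (2*h) D)"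
proof -
  note fin = assms(1)
  interpret fin_digraph G by fact
  define S where "S = {(u,v). u \<in> verts G \<and> v \<in> verts G \<and> dist_minus G len (2*h) C u v > ereal (2*h)}"
  define T where "T = {(u,p,v). apath u p v}"
  define TS where "TS = {(u,p,v). apath u p v \<and> (u,v) \<in> S}"
  define cg where "cg = congestion G cap F"
  define cs where "cs = cut_size G cap C"
  define g where "g = (\<lambda>p. (\<Sum>e\<in>arcs G. if e \<in> set p then C e else 0))"
  have finT: "finite T" unfolding T_def by (rule apaths_finite_triple)
  have TST: "TS \<subseteq> T" unfolding TS_def T_def by auto
  have finS: "finite S"
    by (rule finite_subset[of _ "verts G \<times> verts G"]) (auto simp: S_def)
  have Fnn: "\<And>u p v. apath u p v \<Longrightarrow> 0 \<le> F u p v"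
    using assms(7) by (auto simp: is_flow_def)
  have Cnn: "\<And>e. e \<in> arcs G \<Longrightarrow> 0 \<le> C e"
    using assms(5) by (auto simp: is_moving_cut_def)
  have gnn: "0 \<le> g p" for p unfolding g_def by (rule sum_nonneg) (simp add: Cnn)
  have sep_eq: "sep G len (2*h) C (2*h) D = (\<Sum>(u,p,v)\<in>TS. F u p v)"
  proof -
    have "sep G len (2*h) C (2*h) D = (\<Sum>(u,v)\<in>S. D u v)"
      unfolding sep_def S_def by simp
    also have "\<dots> = (\<Sum>(u,v)\<in>S. \<Sum>p\<in>{p. apath u p v}. F u p v)"
      using assms(8) by (intro sum.cong) (auto simp: S_def routes_def)
    also have "\<dots> = (\<Sum>x\<in>S. \<Sum>p\<in>{p. apath (fst x) p (snd x)}. F (fst x) p (snd x))"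
      by (simp add: case_prod_beta)
    also have "\<dots> = (\<Sum>(x,p)\<in>Sigma S (\<lambda>x. {p. apath (fst x) p (snd x)}). F (fst x) p (snd x))"
      by (rule sum.Sigma) (auto simp: finS apaths_finite)
    also have "\<dots> = (\<Sum>(u,p,v)\<in>TS. F u p v)"
      by (rule sum.reindex_bij_witness[where i="\<lambda>(u,p,v). ((u,v),p)" and j="\<lambda>((u,v),p). (u,p,v)"])
         (auto simp: TS_def)
    finally show ?thesis .
  qed
  have step1: "(\<Sum>(u,p,v)\<in>TS. F u p v) \<le> (\<Sum>(u,p,v)\<in>TS. F u p v * (2 * g p))"
  proof (rule sum_mono)
    fix t assume t: "t \<in> TS"
    obtain u p v where tt: "t = (u,p,v)" by (cases t) auto
    have ap: "apath u p v" and uv: "(u,v) \<in> S" using t tt by (auto simp: TS_def)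
    show "(case t of (u,p,v) \<Rightarrow> F u p v) \<le> (case t of (u,p,v) \<Rightarrow> F u p v * (2 * g p))"
    proof (cases "F u p v > 0")
      case True
      have "wf_digraph.awalk_cost (\<lambda>e. real (len e)) p \<le> h"
        using assms(9) ap True by (auto simp: path_length_bounded_def)
      then have "1 \<le> 2 * g p" unfolding g_def
        using path_cut_bound[OF fin assms(4) ap] uv by (auto simp: S_def)
      then show ?thesis using True tt
        by (simp add: mult_le_cancel_left1)
    next
      case False
      then have "F u p v = 0" using Fnn[OF ap] by simp
      then show ?thesis using tt by simp
    qed
  qed
  have step2: "(\<Sum>(u,p,v)\<in>TS. F u p v * (2 * g p)) \<le> (\<Sum>(u,p,v)\<in>T. F u p v * (2 * g p))"
    by (rule sum_mono2[OF finT TST]) (auto simp: T_def intro!: mult_nonneg_nonneg Fnn gnn)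
  have ft: "flow_through G F e = (\<Sum>(u,p,v)\<in>T. if e \<in> set p then F u p v else 0)" for e
  proof -
    have "{(u,p,v). apath u p v \<and> e \<in> set p} = {t\<in>T. e \<in> set (fst (snd t))}"
      by (auto simp: T_def)
    then show ?thesis unfolding flow_through_def
      by (simp add: sum.inter_filter[OF finT] case_prod_beta if_distrib)
  qed
  have step3: "(\<Sum>(u,p,v)\<in>T. F u p v * (2 * g p)) = 2 * (\<Sum>e\<in>arcs G. C e * flow_through G F e)"
  proof -
    have "(\<Sum>(u,p,v)\<in>T. F u p v * (2 * g p))
        = (\<Sum>t\<in>T. \<Sum>e\<in>arcs G. 2 * (C e * (if e \<in> set (fst (snd t)) then F (fst t) (fst (snd t)) (snd (snd t)) else 0)))"
      unfolding g_def by (intro sum.cong refl) (auto simp: sum_distrib_left sum_distrib_right intro!: sum.cong)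
    also have "\<dots> = (\<Sum>e\<in>arcs G. \<Sum>t\<in>T. 2 * (C e * (if e \<in> set (fst (snd t)) then F (fst t) (fst (snd t)) (snd (snd t)) else 0)))"
      by (rule sum.swap)
    also have "\<dots> = 2 * (\<Sum>e\<in>arcs G. C e * flow_through G F e)"
      unfolding ft by (simp add: sum_distrib_left case_prod_beta)
    finally show ?thesis .
  qed
  have ftb: "flow_through G F e \<le> real (cap e) * cg" if e: "e \<in> arcs G" for e
  proof -
    have "flow_through G F e / real (cap e) \<le> cg"
      unfolding cg_def congestion_def using e finite_arcs by (auto intro: Max_ge)
    moreover have "real (cap e) > 0" using assms(2) e by auto
    ultimately show ?thesis by (simp add: divide_le_eq mult.commute)
  qed
  have step4: "(\<Sum>e\<in>arcs G. C e * flow_through G F e) \<le> cs * cg"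
  proof -
    have "(\<Sum>e\<in>arcs G. C e * flow_through G F e) \<le> (\<Sum>e\<in>arcs G. C e * (real (cap e) * cg))"
      by (rule sum_mono) (auto intro: mult_left_mono ftb Cnn)
    also have "\<dots> = cs * cg" unfolding cs_def cut_size_def
      by (simp add: sum_distrib_right mult.assoc mult.left_commute)
    finally show ?thesis .
  qed
  define sp where "sp = sep G len (2*h) C (2*h) D"
  have spos: "sp > 0" using assms(6) sp_def by simp
  have key: "sp \<le> 2 * (cs * cg)"
    using sep_eq step1 step2 step3 step4 unfolding sp_def by linarith
  have csnn: "cs \<ge> 0" unfolding cs_def cut_size_def by (rule sum_nonneg) (simp add: Cnn)
  have cspos: "cs > 0"
  proof (rule ccontr)
    assume "\<not> cs > 0" then have "cs = 0" using csnn by simp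
    then show False using key spos by simp
  qed
  have "1 / (2 * (cs / sp)) = sp / (2 * cs)" using spos cspos by (simp add: field_simps)
  also have "\<dots> \<le> cg" using key cspos by (simp add: divide_le_eq mult.commute mult.left_commute)
  finally show ?thesis unfolding cg_def cs_def sp_def spars_def .
qed

end
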